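(* Let $U=(U(n))_{n\ge0}$ be defined by $U(0)=1$ and $U(n+1)=3U(n)+1$ for $n\ge0$. Let $\mathbf{x}$ be the fixed point starting with $a$ of the morphism $a\mapsto aaab$, $b\mapsto b$, and let $\tau$ be the coding $a\mapsto0$, $b\mapsto1$. Then the binary sequence $\tau(\mathbf{x})$ satisfies $C_2(\tau(\mathbf{x}),N)\gg N$, i.e., there is $c>0$ with $C_2(\tau(\mathbf{x}),N)\ge cN$ for all sufficiently large $N$.
   Context: Correlation measure: for $\mathbf{s}$ over $\{0,1\}$, $D=(d_1,d_2)$ with $0\le d_1<d_2$ and $M\in\mathbb{N}$, put $V(\mathbf{s},M,D)=\sum_{n=0}^{M-1}(-1)^{\mathbf{s}(n+d_1)+\mathbf{s}(n+d_2)}$, and $C_2(\mathbf{s},N)=\max_{M,D}|V(\mathbf{s},M,D)|$ over all such $D$ and integers $M$ with $M+d_2\le N$. (For reference: $\tau(\mathbf{x})(n)$ is the output, on the greedy $U$-representation of $n$, of the DFAO with states $A$ (initial, output 0), $B$ (output 0), $C$ (output 1) and transitions $A\xrightarrow{1,2}B$, $A\xrightarrow{3}C$, $B\xrightarrow{0,1,2}B$, $B\xrightarrow{3}C$, $C\xrightarrow{0}C$.) *)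

theory Defs
  imports Complex_Main
begin

fun U :: "nat \<Rightarrow> nat" where
  "U 0 = 1"
| "U (Suc n) = 3 * U n + 1"

datatype letter = La | Lb

fun phi_letter :: "letter \<Rightarrow> letter list" where
  "phi_letter La = [La, La, La, Lb]"
| "phi_letter Lb = [Lb]"

definition phi :: "letter list \<Rightarrow> letter list" where
  "phi w = concat (map phi_letter w)"

text \<open>The fixed point starting with a: the limit of the words phi^k(a), each a prefix of
  the next; phi^(n+1)(a) has length U(n+1) > n, so its n-th letter is the n-th letter of x.\<close>
definition xfix :: "nat \<Rightarrow> letter" where
  "xfix n = (phi ^^ (Suc n)) [La] ! n"

fun tau :: "letter \<Rightarrow> nat" where
  "tau La = 0"
| "tau Lb = 1"

definition V :: "(nat \<Rightarrow> nat) \<Rightarrow> nat \<Rightarrow> nat \<Rightarrow> nat \<Rightarrow> int" where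
  "V s M d1 d2 = (\<Sum>n<M. (-1) ^ (s (n + d1) + s (n + d2)))"

definition C2 :: "(nat \<Rightarrow> nat) \<Rightarrow> nat \<Rightarrow> int" where
  "C2 s N = Max {\<bar>V s M d1 d2\<bar> | M d1 d2. d1 < d2 \<and> M + d2 \<le> N}"

end

theory Submission
  imports Defs
begin

lemma phi_append: "phi (u @ v) = phi u @ phi v"
  by (simp add: phi_def)

lemma phipow_append: "(phi ^^ k) (u @ v) = (phi ^^ k) u @ (phi ^^ k) v"
  by (induction k) (simp_all add: phi_append)

lemma phipow_b: "(phi ^^ k) [Lb] = [Lb]"
  by (induction k) (simp_all add: phi_def)

lemma P_Suc: "(phi ^^ Suc k) [La] = (phi ^^ k) [La] @ (phi ^^ k) [La] @ (phi ^^ k) [La] @ [Lb]"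
proof -
  have "(phi ^^ Suc k) [La] = (phi ^^ k) (phi [La])" by (simp add: funpow_Suc_right del: funpow.simps)
  also have "phi [La] = [La] @ [La] @ [La] @ [Lb]" by (simp add: phi_def)
  finally show ?thesis by (simp only: phipow_append phipow_b)
qed

lemma P_len: "length ((phi ^^ k) [La]) = U k"
proof (induction k)
  case (Suc k) then show ?case by (simp only: P_Suc) simp
qed simp

lemma P_prefix: "k \<le> m \<Longrightarrow> (\<exists>t. (phi ^^ m) [La] = (phi ^^ k) [La] @ t)"
proof (induction m)
  case 0 then show ?case by (intro exI[of _ "[]"]) simp
next
  case (Suc m)
  show ?case
  proof (cases "k = Suc m")
    case True then show ?thesis by (intro exI[of _ "[]"]) simp
  next
    case False
    then obtain t where "(phi ^^ m) [La] = (phi ^^ k) [La] @ t" using Suc by fastforce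
    then show ?thesis unfolding P_Suc[of m] by (intro exI[of _ "t @ (phi ^^ m) [La] @ (phi ^^ m) [La] @ [Lb]"]) simp
  qed
qed

lemma U_gt: "n < U n"
  by (induction n) auto

lemma U_pos: "U k \<ge> 1"
  by (cases k) auto

lemma prefix_nth_eq: "(\<exists>t. b = a @ t) \<Longrightarrow> n < length a \<Longrightarrow> a ! n = b ! n"
  by (auto simp: nth_append)

lemma xfix_P: "n < U k \<Longrightarrow> xfix n = (phi ^^ k) [La] ! n"
proof -
  assume n: "n < U k"
  let ?m = "max k (Suc n)"
  have "xfix n = (phi ^^ ?m) [La] ! n"
    unfolding xfix_def
    by (rule prefix_nth_eq[OF P_prefix]) (use U_gt[of "Suc n"] in \<open>auto simp: P_len simp del: funpow.simps U.simps\<close>)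
  also have "\<dots> = (phi ^^ k) [La] ! n"
    by (rule prefix_nth_eq[OF P_prefix, symmetric]) (auto simp: P_len n)
  finally show ?thesis .
qed

lemma xfix_period: "n < 2 * U k \<Longrightarrow> xfix (n + U k) = xfix n"
proof -
  assume n: "n < 2 * U k"
  let ?A = "(phi ^^ k) [La]"
  have LA: "length ?A = U k" by (simp add: P_len)
  have "xfix (n + U k) = (phi ^^ Suc k) [La] ! (n + U k)"
    by (rule xfix_P) (use n in simp)
  also have "\<dots> = (?A @ ((?A @ ?A) @ [Lb])) ! (length ?A + n)" unfolding P_Suc using LA
    by (simp add: add.commute)
  also have "\<dots> = ((?A @ ?A) @ [Lb]) ! n" by (rule nth_append_length_plus)
  also have "\<dots> = (?A @ ?A) ! n" by (rule nth_append_left) (use n LA in simp)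
  also have "\<dots> = ((?A @ ?A) @ (?A @ [Lb])) ! n" by (rule nth_append_left[symmetric]) (use n LA in simp)
  also have "\<dots> = (phi ^^ Suc k) [La] ! n" unfolding P_Suc by simp
  also have "\<dots> = xfix n" by (rule xfix_P[symmetric]) (use n in simp)
  finally show ?thesis .
qed

lemma V_big: "V (tau \<circ> xfix) (2 * U k) 0 (U k) = int (2 * U k)"
proof -
  have "V (tau \<circ> xfix) (2 * U k) 0 (U k) = (\<Sum>n<2 * U k. (1::int))"
    unfolding V_def
  proof (rule sum.cong)
    fix n assume "n \<in> {..<2 * U k}"
    then have "xfix (n + U k) = xfix n" by (simp add: xfix_period)
    then show "(-1::int) ^ ((tau \<circ> xfix) (n + 0) + (tau \<circ> xfix) (n + U k)) = 1"
      by (simp flip: mult_2)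
  qed simp
  then show ?thesis by simp
qed

lemma C2_ge:
  assumes "3 * U k \<le> N"
  shows "C2 (tau \<circ> xfix) N \<ge> int (2 * U k)"
proof -
  let ?S = "{\<bar>V (tau \<circ> xfix) M d1 d2\<bar> | M d1 d2. d1 < d2 \<and> M + d2 \<le> N}"
  have "?S \<subseteq> (\<lambda>(M,d1,d2). \<bar>V (tau \<circ> xfix) M d1 d2\<bar>) ` ({..N} \<times> {..N} \<times> {..N})"
    by (auto simp: image_iff) (metis atMost_iff le_add1 le_add2 le_trans less_imp_le_nat)
  then have fin: "finite ?S" by (rule finite_subset) simp
  have "\<bar>V (tau \<circ> xfix) (2 * U k) 0 (U k)\<bar> \<in> ?S"
    using assms U_pos[of k] by (intro CollectI exI[of _ "2 * U k"] exI[of _ 0] exI[of _ "U k"]) auto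
  then have "\<bar>V (tau \<circ> xfix) (2 * U k) 0 (U k)\<bar> \<le> C2 (tau \<circ> xfix) N"
    unfolding C2_def using fin by (rule Max_ge[rotated])
  then show ?thesis by (simp add: V_big)
qed

lemma exists_k: "N \<ge> 3 \<Longrightarrow> \<exists>k. 3 * U k \<le> N \<and> N \<le> 12 * U k"
proof (induction N rule: dec_induct)
  case base then show ?case by (intro exI[of _ 0]) simp
next
  case (step N)
  then obtain k where k: "3 * U k \<le> N" "N \<le> 12 * U k" by blast
  show ?case
  proof (cases "Suc N \<le> 12 * U k")
    case True then show ?thesis using k by (intro exI[of _ k]) auto
  next
    case False
    then show ?thesis using k U_pos[of k] by (intro exI[of _ "Suc k"]) simp
  qed
qed

theorem mainTheorem7:
  shows "\<exists>c::real. c > 0 \<and> (\<exists>N0. \<forall>N\<ge>N0. real_of_int (C2 (tau \<circ> xfix) N) \<ge> c * real N)"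
proof (intro exI[of _ "1/6"] conjI exI[of _ 3] allI impI)
  fix N :: nat assume "3 \<le> N"
  then obtain k where k: "3 * U k \<le> N" "N \<le> 12 * U k" using exists_k by blast
  have "int (2 * U k) \<le> C2 (tau \<circ> xfix) N" by (rule C2_ge[OF k(1)])
  then have "real (2 * U k) \<le> real_of_int (C2 (tau \<circ> xfix) N)"
    by (metis of_int_le_iff of_int_of_nat_eq)
  moreover have "1/6 * real N \<le> real (2 * U k)" using k(2) by simp
  ultimately show "1/6 * real N \<le> real_of_int (C2 (tau \<circ> xfix) N)" by linarith
qed simp

end
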